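(* Let $\sigma>0$, $\alpha>0$, and set $\eta=\sqrt{\alpha+1}$. Define $p(t)=(\alpha+1)\log(\sigma\eta+t)$ for $t\ge0$, and for $\hat\beta\in\mathbb{R}$ let $$\tilde\beta(\hat\beta)=\arg\min_{\beta\in\mathbb{R}}\left\{\tfrac12(\hat\beta-\beta)^2+\sigma^{2}p(|\beta|)\right\}.$$ Then for every $\hat\beta\in\mathbb{R}$ this minimizer is unique, and the estimator $\hat\beta\mapsto\tilde\beta(\hat\beta)$ is a continuous function of $\hat\beta$ on $\mathbb{R}$.
   Context: This penalty is the part of $-\log\pi(\beta\mid\sigma)$ depending on $\beta$ under the generalized double Pareto prior $\mathrm{GDP}(\xi=\sigma\eta/\alpha,\alpha)$ with density $\frac{1}{2\xi}(1+|\beta|/(\alpha\xi))^{-(\alpha+1)}$; the problem corresponds to one coordinate of penalized least squares with orthonormal design, $\hat\beta=\mathbf{x}_j'\mathbf{y}$. *)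

theory Defs
  imports "HOL-Analysis.Analysis"
begin

definition gdp_pen :: "real \<Rightarrow> real \<Rightarrow> real \<Rightarrow> real" where
  "gdp_pen \<sigma> \<alpha> t = (\<alpha> + 1) * ln (\<sigma> * sqrt (\<alpha> + 1) + t)"

definition gdp_obj :: "real \<Rightarrow> real \<Rightarrow> real \<Rightarrow> real \<Rightarrow> real" where
  "gdp_obj \<sigma> \<alpha> bh b = (1/2) * (bh - b)^2 + \<sigma>^2 * gdp_pen \<sigma> \<alpha> \<bar>b\<bar>"

definition gdp_est :: "real \<Rightarrow> real \<Rightarrow> real \<Rightarrow> real" where
  "gdp_est \<sigma> \<alpha> bh = (THE b. is_arg_min (gdp_obj \<sigma> \<alpha> bh) (\<lambda>_. True) b)"

end

theory Submission
  imports Defs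
begin

definition hh :: "real \<Rightarrow> real \<Rightarrow> real" where
  "hh c x = max 0 ((x - c + sqrt (max 0 ((x+c)^2 - 4*c^2)))/2)"

definition EE :: "real \<Rightarrow> real \<Rightarrow> real" where
  "EE c x = hh c x - hh c (-x)"

definition ff :: "real \<Rightarrow> real \<Rightarrow> real \<Rightarrow> real" where
  "ff c bh b = (1/2)*(bh-b)^2 + c^2 * ln (c + \<bar>b\<bar>)"

lemma hh_zero:
  assumes "c > 0" "x \<le> c" shows "hh c x = 0"
proof (cases "(x+c)^2 - 4*c^2 \<le> 0")
  case True then show ?thesis using assms by (simp add: hh_def)
next
  case False
  hence "(x+c)^2 > (2*c)^2" by (simp add: power_mult_distrib)
  hence "\<bar>x+c\<bar> > 2*c" using assms by (metis abs_of_pos power2_less_imp_less abs_ge_zero real_sqrt_abs real_sqrt_less_iff  mult_pos_pos zero_less_numeral abs_less_iff less_eq_real_def  power2_abs)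
  hence neg: "x + c < -2*c" using assms by auto
  have "sqrt ((x+c)^2 - 4*c^2) \<le> sqrt ((x+c)^2)" by (rule real_sqrt_le_mono) simp
  also have "\<dots> = -(x+c)" using neg assms by (simp add: abs_if)
  finally have "x - c + sqrt (max 0 ((x+c)^2 - 4*c^2)) < 0" using False assms by auto
  thus ?thesis by (simp add: hh_def)
qed

lemma hh_pos:
  assumes "c > 0" "x > c"
  shows "hh c x = (x - c + sqrt ((x+c)^2 - 4*c^2))/2"
    and "(x+c)^2 - 4*c^2 > (x - c)^2"
    and "hh c x > 0"
proof -
  show D: "(x+c)^2 - 4*c^2 > (x - c)^2" using assms by (simp add: power2_eq_square algebra_simps)
  have "sqrt ((x+c)^2 - 4*c^2) > sqrt ((x-c)^2)" using D by (simp only: real_sqrt_less_iff)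
  hence s: "sqrt ((x+c)^2 - 4*c^2) > x - c" using assms by simp
  have "(x - c)^2 \<ge> 0" by simp
  hence "max 0 ((x+c)^2 - 4*c^2) = (x+c)^2 - 4*c^2" using D by linarith
  thus "hh c x = (x - c + sqrt ((x+c)^2 - 4*c^2))/2" using s assms by (simp add: hh_def)
  thus "hh c x > 0" using s assms by simp
qed

lemma gsign:
  assumes c: "c > 0" and bh: "bh \<ge> 0" and x: "x \<ge> 0"
  shows "x > hh c bh \<Longrightarrow> x^2 + (c-bh)*x + c^2 - bh*c > 0"
    and "x < hh c bh \<Longrightarrow> x^2 + (c-bh)*x + c^2 - bh*c < 0"
proof -
  have "(x > hh c bh \<longrightarrow> x^2 + (c-bh)*x + c^2 - bh*c > 0) \<and>
        (x < hh c bh \<longrightarrow> x^2 + (c-bh)*x + c^2 - bh*c < 0)"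
  proof (cases "bh \<le> c")
    case True
    hence h0: "hh c bh = 0" using hh_zero c by blast
    have "x > 0 \<Longrightarrow> x^2 + (c-bh)*x + c^2 - bh*c > 0"
    proof -
      assume "x > 0"
      hence "x^2 > 0" by simp
      moreover have "(c-bh)*(x+c) \<ge> 0" using True x c by simp
      ultimately show ?thesis by (simp add: algebra_simps power2_eq_square)
    qed
    thus ?thesis using h0 x by auto
  next
    case False
    hence gt: "bh > c" by simp
    define s where "s = sqrt ((bh+c)^2 - 4*c^2)"
    have D: "(bh+c)^2 - 4*c^2 > (bh - c)^2" using hh_pos(2)[OF c gt] .
    have s2: "s^2 = (bh+c)^2 - 4*c^2" unfolding s_def using D
      by (smt (verit) real_sqrt_pow2 zero_le_power2)
    have sgt: "s > bh - c"
    proof -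
      have "sqrt ((bh+c)^2 - 4*c^2) > sqrt ((bh-c)^2)" using D by (simp only: real_sqrt_less_iff)
      thus ?thesis using gt unfolding s_def by simp
    qed
    have b0: "hh c bh = (bh - c + s)/2" using hh_pos(1)[OF c gt] s_def by simp
    define r1 where "r1 = (bh - c - s)/2"
    have r1neg: "r1 < 0" using sgt unfolding r1_def by simp
    have sum: "hh c bh + r1 = bh - c" using b0 r1_def by simp
    have prod: "hh c bh * r1 = ((bh-c)^2 - s^2)/4" unfolding b0 r1_def
      by (simp add: power2_eq_square field_simps)
    have prod2: "hh c bh * r1 = c^2 - bh*c" using prod s2 by (simp add: power2_eq_square algebra_simps)
    have g: "x^2 + (c-bh)*x + c^2 - bh*c = (x - hh c bh)*(x - r1)"
    proof -
      have "(x - hh c bh)*(x - r1) = x^2 - (hh c bh + r1)*x + hh c bh * r1"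
        by (simp add: power2_eq_square algebra_simps)
      also have "\<dots> = x^2 - (bh - c)*x + (c^2 - bh*c)" using sum prod2 by simp
      finally show ?thesis by (simp add: algebra_simps)
    qed
    have "x - r1 > 0" using r1neg x by simp
    thus ?thesis unfolding g by (simp add: mult_pos_pos mult_neg_pos)
  qed
  thus "x > hh c bh \<Longrightarrow> x^2 + (c-bh)*x + c^2 - bh*c > 0"
    and "x < hh c bh \<Longrightarrow> x^2 + (c-bh)*x + c^2 - bh*c < 0" by auto
qed

lemma Fderiv:
  assumes "c + x > 0"
  shows "((\<lambda>x. (1/2)*(bh-x)^2 + c^2 * ln (c + x)) has_real_derivative
          (x^2 + (c-bh)*x + c^2 - bh*c)/(c+x)) (at x)"
proof -
  have "((\<lambda>x. (1/2)*(bh-x)^2 + c^2 * ln (c + x)) has_real_derivative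
          (1/2)*(2*(bh-x)*(-1)) + c^2 * (1/(c+x))) (at x)"
    using assms by (auto intro!: derivative_eq_intros)
  moreover have "(1/2)*(2*(bh-x)*(-1)) + c^2 * (1/(c+x)) = (x^2 + (c-bh)*x + c^2 - bh*c)/(c+x)"
    using assms by (simp add: field_simps power2_eq_square)
  ultimately show ?thesis by simp
qed

lemma Fcont:
  fixes a b c bh :: real
  assumes "c > 0" "0 \<le> a"
  shows "continuous_on {a..b} (\<lambda>x. (1/2)*(bh-x)^2 + c^2 * ln (c + x))"
proof -
  have "continuous_on {a..b} (\<lambda>x. ln (c + x))"
    by (intro continuous_intros) (use assms in auto)
  thus ?thesis using assms by (intro continuous_intros) auto
qed

lemma Finc:
  assumes c: "c > 0" and bh: "bh \<ge> 0" and ab: "hh c bh \<le> a" "a < b"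
  shows "(1/2)*(bh-a)^2 + c^2 * ln (c + a) < (1/2)*(bh-b)^2 + c^2 * ln (c + b)"
proof -
  have a0: "0 \<le> a" using ab hh_def by (metis max.bounded_iff order_trans)
  define F where "F = (\<lambda>x. (1/2)*(bh-x)^2 + c^2 * ln (c + x))"
  have "F a < F b"
  proof (rule DERIV_pos_imp_increasing_open[OF ab(2)])
    fix x assume x: "a < x" "x < b"
    have "x^2 + (c-bh)*x + c^2 - bh*c > 0" using gsign(1)[OF c bh, of x] x ab a0 by auto
    moreover have "c + x > 0" using x a0 c by simp
    ultimately show "\<exists>y. (F has_real_derivative y) (at x) \<and> 0 < y"
      using Fderiv[of c x bh] unfolding F_def by (intro exI[of _ "(x^2 + (c-bh)*x + c^2 - bh*c)/(c+x)"]) auto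
  next
    show "continuous_on {a..b} F"
      using Fcont[OF c a0, of b bh] unfolding F_def by simp
  qed
  thus ?thesis by (simp add: F_def)
qed

lemma Fdec:
  assumes c: "c > 0" and bh: "bh \<ge> 0" and ab: "0 \<le> a" "a < b" "b \<le> hh c bh"
  shows "(1/2)*(bh-a)^2 + c^2 * ln (c + a) > (1/2)*(bh-b)^2 + c^2 * ln (c + b)"
proof -
  define F where "F = (\<lambda>x. (1/2)*(bh-x)^2 + c^2 * ln (c + x))"
  have "F a > F b"
  proof (rule DERIV_neg_imp_decreasing_open[OF ab(2)])
    fix x assume x: "a < x" "x < b"
    have "x^2 + (c-bh)*x + c^2 - bh*c < 0" using gsign(2)[OF c bh, of x] x ab by auto
    moreover have "c + x > 0" using x ab c by simp
    ultimately show "\<exists>y. (F has_real_derivative y) (at x) \<and> y < 0"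
      using Fderiv[of c x bh] unfolding F_def by (intro exI[of _ "(x^2 + (c-bh)*x + c^2 - bh*c)/(c+x)"])
        (auto simp: divide_neg_pos)
  next
    show "continuous_on {a..b} F"
      using Fcont[OF c ab(1), of b bh] unfolding F_def by simp
  qed
  thus ?thesis by (simp add: F_def)
qed

lemma hh_nonneg: "hh c x \<ge> 0" by (simp add: hh_def)

lemma key_nonneg:
  assumes c: "c > 0" and bh: "bh \<ge> 0" and x: "x \<ge> 0" "x \<noteq> hh c bh"
  shows "ff c bh (hh c bh) < ff c bh x"
proof -
  have h0: "hh c bh \<ge> 0" by (rule hh_nonneg)
  show ?thesis
  proof (cases "x > hh c bh")
    case True
    thus ?thesis using Finc[OF c bh order_refl True] h0 x by (simp add: ff_def)
  next
    case False
    hence "x < hh c bh" using x by simp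
    thus ?thesis using Fdec[OF c bh x(1) _ order_refl] h0 x by (simp add: ff_def)
  qed
qed

lemma key:
  assumes c: "c > 0" and bh: "bh \<ge> 0" and b: "b \<noteq> hh c bh"
  shows "ff c bh (hh c bh) < ff c bh b"
proof (cases "b \<ge> 0")
  case True thus ?thesis using key_nonneg[OF c bh True b] by simp
next
  case False
  hence bn: "b < 0" by simp
  have le: "ff c bh (-b) \<le> ff c bh b"
  proof -
    have "(bh + b)^2 \<le> (bh - b)^2" using bh bn
      by (simp add: power2_eq_square algebra_simps mult_nonpos_nonneg)
    thus ?thesis by (simp add: ff_def)
  qed
  show ?thesis
  proof (cases "-b = hh c bh")
    case False
    thus ?thesis using key_nonneg[OF c bh _ False] bn le by simp
  next
    case True
    hence "hh c bh > 0" using bn by simp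
    hence "bh > c" using hh_zero[OF c, of bh] by fastforce
    hence "(bh + b)^2 < (bh - b)^2" using bn c
      by (simp add: power2_eq_square algebra_simps mult_neg_pos)
    hence "ff c bh (-b) < ff c bh b" by (simp add: ff_def)
    thus ?thesis using True by simp
  qed
qed

lemma keyE:
  assumes c: "c > 0" and b: "b \<noteq> EE c bh"
  shows "ff c bh (EE c bh) < ff c bh b"
proof (cases "bh \<ge> 0")
  case True
  have "hh c (-bh) = 0" using hh_zero[OF c] True c by simp
  hence "EE c bh = hh c bh" by (simp add: EE_def)
  thus ?thesis using key[OF c True] b by simp
next
  case False
  have "hh c bh = 0" using hh_zero[OF c] False c by simp
  hence E: "EE c bh = - hh c (-bh)" by (simp add: EE_def)
  have sym: "\<And>y. ff c bh y = ff c (-bh) (-y)" by (simp add: ff_def power2_commute)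
  have "-b \<noteq> hh c (-bh)" using b E by auto
  from key[OF c _ this] False have "ff c (-bh) (hh c (-bh)) < ff c (-bh) (-b)" by simp
  thus ?thesis using E sym by simp
qed

theorem proposition4:
  fixes \<sigma> \<alpha> :: real
  assumes "\<sigma> > 0" and "\<alpha> > 0"
  shows "(\<forall>bh. \<exists>!b. is_arg_min (gdp_obj \<sigma> \<alpha> bh) (\<lambda>_. True) b)
         \<and> continuous_on UNIV (gdp_est \<sigma> \<alpha>)"
proof -
  define c where "c = \<sigma> * sqrt (\<alpha> + 1)"
  have c: "c > 0" using assms by (simp add: c_def)
  have c2: "c^2 = \<sigma>^2 * (\<alpha> + 1)" using assms by (simp add: c_def power_mult_distrib)
  have obj: "gdp_obj \<sigma> \<alpha> = ff c"
    by (intro ext) (simp add: gdp_obj_def gdp_pen_def ff_def c2 c_def[symmetric])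
  have am: "\<And>bh b. is_arg_min (gdp_obj \<sigma> \<alpha> bh) (\<lambda>_. True) b \<longleftrightarrow> b = EE c bh"
  proof -
    fix bh b
    show "is_arg_min (gdp_obj \<sigma> \<alpha> bh) (\<lambda>_. True) b \<longleftrightarrow> b = EE c bh"
      unfolding obj is_arg_min_def using keyE[OF c]
      by (metis less_asym)
  qed
  have est: "gdp_est \<sigma> \<alpha> = EE c"
    by (intro ext) (simp add: gdp_est_def am)
  have cont: "continuous_on UNIV (EE c)"
    unfolding EE_def[abs_def] hh_def by (intro continuous_intros) auto
  show ?thesis using am est cont by auto
qed

end
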